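(* Let $n\ge2$, $G=\mathrm{SL}(n,\mathbb{R})$, $V$ a finite-dimensional real continuous linear representation of $G$. Let $x_i\to x$ be a convergent sequence in $\mathbb{R}^{n-1}$ and $v\in V$ such that $u(x_i)v\in V^0+V^-$ for all $i\in\mathbb{N}$. Suppose there is a sequence $\delta_i\to0$ of nonzero reals such that $f=\lim_{i\to\infty}(x_i-x)/\delta_i$ exists. Then $u(f)\in\mathrm{Stab}_G(\pi_0(u(x)v))$.
   Context: $\mathcal{A}=\mathrm{diag}(n-1,-1,\dots,-1)$ acting on $V$ via the derived representation; $V^\mu=\{v:\mathcal{A}v=\mu v\}$, $V^-=\sum_{\mu<0}V^\mu$, $\pi_0:V\to V^0$ the projection parallel to the other eigenspaces of $\mathcal{A}$. $u(\xi)$ ($\xi\in\mathbb{R}^{n-1}$) is the identity matrix with first row replaced by $(1,\xi)$. *)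

theory Defs
  imports "HOL-Analysis.Analysis"
begin

text \<open>Matrices of size n = CARD('m) + 1 are indexed by the type 'm option;
  the index None plays the role of the first coordinate, and R^(n-1) is real^'m.\<close>

definition SL :: "(real^'n^'n) set" where
  "SL = {g. det g = 1}"

definition is_rep :: "(real^'n^'n \<Rightarrow> 'v::euclidean_space \<Rightarrow> 'v) \<Rightarrow> bool" where
  "is_rep \<rho> \<longleftrightarrow>
     (\<forall>g\<in>SL. linear (\<rho> g)) \<and>
     (\<forall>g\<in>SL. \<forall>h\<in>SL. \<rho> (g ** h) = \<rho> g \<circ> \<rho> h) \<and>
     \<rho> (mat 1) = id \<and>
     continuous_on (SL \<times> UNIV) (\<lambda>(g, v). \<rho> g v)"

text \<open>exp(t A) for A = diag(n-1,-1,...,-1).\<close>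
definition Aexp :: "real \<Rightarrow> real^('m::finite option)^('m option)" where
  "Aexp t = (\<chi> i j. if i = j then (if i = None then exp (real CARD('m) * t) else exp (- t)) else 0)"

text \<open>Eigenspace V^mu of the derived action of A: d/dt rho(exp(tA)) v at t=0 equals mu v.\<close>
definition eigsp :: "(real^('m::finite option)^('m option) \<Rightarrow> 'v::euclidean_space \<Rightarrow> 'v) \<Rightarrow> real \<Rightarrow> 'v set" where
  "eigsp \<rho> \<mu> = {v. ((\<lambda>t. \<rho> (Aexp t) v) has_vector_derivative (\<mu> *\<^sub>R v)) (at 0)}"

definition Vminus :: "(real^('m::finite option)^('m option) \<Rightarrow> 'v::euclidean_space \<Rightarrow> 'v) \<Rightarrow> 'v set" where
  "Vminus \<rho> = span (\<Union>\<mu>\<in>{\<mu>. \<mu> < 0}. eigsp \<rho> \<mu>)"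

definition Vother :: "(real^('m::finite option)^('m option) \<Rightarrow> 'v::euclidean_space \<Rightarrow> 'v) \<Rightarrow> 'v set" where
  "Vother \<rho> = span (\<Union>\<mu>\<in>{\<mu>. \<mu> \<noteq> 0}. eigsp \<rho> \<mu>)"

definition pi0 :: "(real^('m::finite option)^('m option) \<Rightarrow> 'v::euclidean_space \<Rightarrow> 'v) \<Rightarrow> 'v \<Rightarrow> 'v" where
  "pi0 \<rho> v = (THE w. w \<in> eigsp \<rho> 0 \<and> v - w \<in> Vother \<rho>)"

definition upper :: "real^'m \<Rightarrow> real^('m::finite option)^('m option)" where
  "upper \<xi> = (\<chi> i j. if i = None then (case j of None \<Rightarrow> 1 | Some k \<Rightarrow> \<xi> $ k)
                      else (if i = j then 1 else 0))"

definition Stab :: "(real^'n^'n \<Rightarrow> 'v \<Rightarrow> 'v) \<Rightarrow> 'v \<Rightarrow> (real^'n^'n) set" where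
  "Stab \<rho> w = {g \<in> SL. \<rho> g w = w}"

end

theory Submission
  imports Defs
begin


lemma sum_option: "(\<Sum>k\<in>(UNIV::'m::finite option set). g k) = g None + (\<Sum>k\<in>UNIV. g (Some k))"
  by (simp add: UNIV_option_conv sum.reindex)

lemma diag_left:
  assumes "\<And>i k. i \<noteq> k \<Longrightarrow> D $ i $ k = (0::real)"
  shows "(D ** M) $ i $ j = D $ i $ i * M $ i $ j"
proof -
  have "(D ** M) $ i $ j = (\<Sum>k\<in>UNIV. D $ i $ k * M $ k $ j)" by (simp add: matrix_matrix_mult_def)
  also have "\<dots> = (\<Sum>k\<in>UNIV. if k = i then D $ i $ i * M $ i $ j else 0)"
    by (rule sum.cong) (auto simp: assms)
  finally show ?thesis by simp
qed

lemma diag_right: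
  assumes "\<And>i k. i \<noteq> k \<Longrightarrow> D $ i $ k = (0::real)"
  shows "(M ** D) $ i $ j = M $ i $ j * D $ j $ j"
proof -
  have "(M ** D) $ i $ j = (\<Sum>k\<in>UNIV. M $ i $ k * D $ k $ j)" by (simp add: matrix_matrix_mult_def)
  also have "\<dots> = (\<Sum>k\<in>UNIV. if k = j then M $ i $ j * D $ j $ j else 0)"
    by (rule sum.cong) (auto simp: assms)
  finally show ?thesis by simp
qed

lemma Aexp_diag: "i \<noteq> k \<Longrightarrow> Aexp t $ i $ k = 0" by (simp add: Aexp_def)

lemma upper_mult: "upper a ** upper b = upper (a + b)"
proof -
  have "(upper a ** upper b) $ i $ j = upper (a + b) $ i $ j" for i j
  proof -
    have "(upper a ** upper b) $ i $ j = (\<Sum>k\<in>UNIV. upper a $ i $ k * upper b $ k $ j)"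
      by (simp add: matrix_matrix_mult_def)
    also have "\<dots> = upper a $ i $ None * upper b $ None $ j + (\<Sum>k\<in>UNIV. upper a $ i $ Some k * upper b $ Some k $ j)"
      by (rule sum_option)
    also have "\<dots> = upper (a + b) $ i $ j"
    proof (cases i)
      case None
      then show ?thesis
      proof (cases j)
        case (Some l)
        have "(\<Sum>k\<in>UNIV. a $ k * (if Some k = Some l then 1 else 0)) = a $ l"
          by (simp add: if_distrib[of "\<lambda>x. _ * x"] cong: if_cong)
        then show ?thesis using None Some by (simp add: upper_def)
      qed (simp add: upper_def)
    next
      case (Some p)
      have "(\<Sum>k\<in>UNIV. (if Some p = Some k then 1 else 0) * upper b $ Some k $ j) = upper b $ Some p $ j"
        by (simp add: if_distrib[of "\<lambda>x. x * _"] cong: if_cong)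
      then show ?thesis using Some by (simp add: upper_def)
    qed
    finally show ?thesis .
  qed
  then show ?thesis by (simp add: vec_eq_iff)
qed

lemma upper_0: "upper 0 = mat 1"
  unfolding upper_def mat_def by (auto simp: vec_eq_iff split: option.splits)

lemma Aexp_mult: "Aexp s ** Aexp t = Aexp (s + t)"
  by (simp add: vec_eq_iff diag_left Aexp_diag) (simp add: Aexp_def exp_add[symmetric] algebra_simps)

lemma Aexp_0: "Aexp 0 = mat 1"
  unfolding Aexp_def mat_def by (auto simp: vec_eq_iff)

lemma Aexp_upper: "Aexp t ** upper y = upper (exp ((real CARD('m) + 1) * t) *\<^sub>R y) ** (Aexp t :: real^('m::finite option)^('m option))"
proof -
  have "(Aexp t ** upper y) $ i $ j = (upper (exp ((real CARD('m) + 1) * t) *\<^sub>R y) ** (Aexp t :: real^('m::finite option)^('m option))) $ i $ j" for i j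
  proof -
    have l: "(Aexp t ** upper y) $ i $ j = Aexp t $ i $ i * upper y $ i $ j"
      by (rule diag_left) (rule Aexp_diag)
    have r: "(upper (exp ((real CARD('m) + 1) * t) *\<^sub>R y) ** (Aexp t :: real^('m::finite option)^('m option))) $ i $ j
       = upper (exp ((real CARD('m) + 1) * t) *\<^sub>R y) $ i $ j * Aexp t $ j $ j"
      by (rule diag_right) (rule Aexp_diag)
    show ?thesis unfolding l r
      by (cases i; cases j) (simp_all add: Aexp_def upper_def exp_add[symmetric] algebra_simps)
  qed
  then show ?thesis by (simp add: vec_eq_iff)
qed

lemma det_Aexp: "det (Aexp t :: real^('m::finite option)^('m option)) = 1"
  apply (subst det_diagonal)
   apply (simp add: Aexp_def)
  apply (simp add: Aexp_def UNIV_option_conv prod.reindex exp_of_nat_mult[symmetric] exp_add[symmetric])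
  done

lemma det_upper: "det (upper y :: real^('m::finite option)^('m option)) = 1"
proof -
  define X :: "real^('m option)" where "X = (\<Sum>k\<in>UNIV. (y $ k) *s row (Some k) (mat 1))"
  have "X \<in> vec.span {row j (mat 1 :: real^('m option)^('m option)) |j. j \<noteq> None}"
    unfolding X_def
  proof (rule vec.span_sum)
    fix k :: 'm
    have "row (Some k) (mat 1 :: real^('m option)^('m option)) \<in> {row j (mat 1 :: real^('m option)^('m option)) |j. j \<noteq> None}"
      by blast
    then show "(y $ k) *s row (Some k) (mat 1) \<in> vec.span {row j (mat 1 :: real^('m option)^('m option)) |j. j \<noteq> None}"
      by (intro vec.span_scale vec.span_base)
  qed
  from det_row_span[OF this] have "det (\<chi> k. if k = None then row None (mat 1) + X else row k (mat 1 :: real^('m option)^('m option))) = 1"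
    by simp
  moreover have "(\<chi> k. if k = None then row None (mat 1) + X else row k (mat 1 :: real^('m option)^('m option))) = upper y"
  proof -
    have Xj: "X $ j = (case j of None \<Rightarrow> 0 | Some l \<Rightarrow> y $ l)" for j
    proof -
      have "X $ j = (\<Sum>k\<in>UNIV. y $ k * (if Some k = j then 1 else 0))"
        unfolding X_def by (simp add: sum_component row_def mat_def)
      then show ?thesis by (cases j) (simp_all add: if_distrib[of "\<lambda>x. _ * x"] cong: if_cong)
    qed
    show ?thesis
      by (simp add: vec_eq_iff Xj row_def mat_def upper_def split: option.splits)
  qed
  ultimately show ?thesis by simp
qed

lemma upper_SL: "upper y \<in> SL" by (simp add: SL_def det_upper)
lemma Aexp_SL: "Aexp t \<in> SL" by (simp add: SL_def det_Aexp)




locale R =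
  fixes \<rho> :: "real^('m::finite option)^('m option) \<Rightarrow> 'v::euclidean_space \<Rightarrow> 'v"
  assumes rep: "is_rep \<rho>"
begin

lemma lin: "g \<in> SL \<Longrightarrow> linear (\<rho> g)"
  using rep unfolding is_rep_def by blast

lemma blin: "g \<in> SL \<Longrightarrow> bounded_linear (\<rho> g)"
  using lin linear_conv_bounded_linear by blast

lemma hom: "g \<in> SL \<Longrightarrow> h \<in> SL \<Longrightarrow> \<rho> (g ** h) u = \<rho> g (\<rho> h u)"
  using rep unfolding is_rep_def by (metis comp_apply)

lemma rid[simp]: "\<rho> (mat 1) u = u"
  using rep unfolding is_rep_def by simp

lemma cont:
  assumes "(g \<longlongrightarrow> g0) F" "(u \<longlongrightarrow> u0) F" "eventually (\<lambda>i. g i \<in> SL) F" "g0 \<in> SL"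
  shows "((\<lambda>i. \<rho> (g i) (u i)) \<longlongrightarrow> \<rho> g0 u0) F"
proof -
  have c: "continuous_on (SL \<times> UNIV) (\<lambda>(g, v). \<rho> g v)" using rep unfolding is_rep_def by blast
  have "((\<lambda>i. (\<lambda>(g, v). \<rho> g v) (g i, u i)) \<longlongrightarrow> (\<lambda>(g, v). \<rho> g v) (g0, u0)) F"
    by (rule continuous_on_tendsto_compose[OF c]) (use assms in \<open>auto intro: tendsto_Pair elim: eventually_mono\<close>)
  then show ?thesis by simp
qed

abbreviation "a t \<equiv> \<rho> (Aexp t)"

lemma a_add: "a s (a t u) = a (s + t) u"
  by (metis hom Aexp_SL Aexp_mult)

lemma a_0[simp]: "a 0 u = u" by (simp add: Aexp_0)

lemma a_lin: "linear (a t)" by (rule lin[OF Aexp_SL])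

lemma eig_char: "u \<in> eigsp \<rho> \<mu> \<longleftrightarrow> (\<forall>t. a t u = exp (\<mu> * t) *\<^sub>R u)"
proof
  assume "u \<in> eigsp \<rho> \<mu>"
  then have D: "((\<lambda>t. a t u) has_vector_derivative \<mu> *\<^sub>R u) (at 0)" by (simp add: eigsp_def)
  have D2: "((\<lambda>t. a t u) has_vector_derivative \<mu> *\<^sub>R a s u) (at s)" for s
  proof -
    have bl: "bounded_linear (a s)" by (rule blin[OF Aexp_SL])
    have "((\<lambda>h. a s (a h u)) has_vector_derivative a s (\<mu> *\<^sub>R u)) (at 0)"
      by (rule bounded_linear.has_vector_derivative[OF bl D])
    then have d1: "((\<lambda>h. a s (a h u)) has_vector_derivative \<mu> *\<^sub>R a s u) (at ((\<lambda>t. t - s) s))"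
      using bl by (simp add: linear_simps(5) bounded_linear.linear)
    have d0: "((\<lambda>t. t - s) has_vector_derivative 1) (at s)"
      by (auto intro!: derivative_eq_intros)
    from vector_diff_chain_at[OF d0 d1] have "((\<lambda>t. a s (a (t - s) u)) has_vector_derivative \<mu> *\<^sub>R a s u) (at s)"
      by (simp add: o_def)
    then show ?thesis by (simp add: a_add)
  qed
  have D3: "((\<lambda>t. exp (- \<mu> * t) *\<^sub>R a t u) has_vector_derivative 0) (at s within UNIV)" for s
  proof -
    have "((\<lambda>t. exp (- \<mu> * t) *\<^sub>R a t u) has_vector_derivative
        (exp (- \<mu> * s) *\<^sub>R (\<mu> *\<^sub>R a s u) + (exp (- \<mu> * s) * (- \<mu>)) *\<^sub>R a s u)) (at s)"
      by (rule has_vector_derivative_scaleR[OF _ D2]) (auto intro!: derivative_eq_intros)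
    then show ?thesis by (simp add: algebra_simps)
  qed
  note hz = has_vector_derivative_zero_constant[of UNIV "\<lambda>t. exp (- \<mu> * t) *\<^sub>R a t u", OF convex_UNIV D3]
  obtain c where c0: "\<And>t. t \<in> UNIV \<Longrightarrow> exp (- \<mu> * t) *\<^sub>R a t u = c"
    by (rule hz) blast
  have c: "\<And>t. exp (- \<mu> * t) *\<^sub>R a t u = c" using c0 by simp
  from c[of 0] have "c = u" by simp
  show "\<forall>t. a t u = exp (\<mu> * t) *\<^sub>R u"
  proof
    fix t
    have e1: "exp (- \<mu> * t) *\<^sub>R a t u = u" using c[of t] \<open>c = u\<close> by simp
    have "a t u = exp (\<mu> * t) *\<^sub>R (exp (- \<mu> * t) *\<^sub>R a t u)"
      by (simp add: exp_minus field_simps)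
    then show "a t u = exp (\<mu> * t) *\<^sub>R u" unfolding e1 .
  qed
next
  assume "\<forall>t. a t u = exp (\<mu> * t) *\<^sub>R u"
  then have e: "(\<lambda>t. a t u) = (\<lambda>t. exp (\<mu> * t) *\<^sub>R u)" by auto
  have "((\<lambda>t. exp (\<mu> * t) *\<^sub>R u) has_vector_derivative (exp (\<mu> * 0) * \<mu>) *\<^sub>R u) (at 0)"
    by (auto intro!: derivative_eq_intros)
  then show "u \<in> eigsp \<rho> \<mu>" by (simp add: eigsp_def e)
qed

lemma eig_subspace: "subspace (eigsp \<rho> \<mu>)"
  unfolding subspace_def
  by (auto simp: eig_char linear_0[OF a_lin] linear_add[OF a_lin] linear_scale[OF a_lin] scaleR_add_right)

lemma eig_inv: "u \<in> eigsp \<rho> \<mu> \<Longrightarrow> a t u \<in> eigsp \<rho> \<mu>"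
  unfolding eig_char by (simp add: linear_scale[OF a_lin] a_add add.commute)

end



lemma l0: "(y::real) > 0 \<Longrightarrow> exp (- ln y) = 1 / y"
  by (simp add: exp_minus inverse_eq_divide)

lemma l1: "\<sigma> * \<sigma> = (1::real) \<Longrightarrow> \<sigma> * d > 0 \<Longrightarrow> 1 / (\<sigma> * d) = \<sigma> * (1 / d)"
proof -
  assume s: "\<sigma> * \<sigma> = 1" and p: "\<sigma> * d > 0"
  then have "d \<noteq> 0" "\<sigma> \<noteq> 0" by auto
  have "\<sigma> * (1 / d) = (\<sigma> * \<sigma>) / (\<sigma> * d)" using \<open>\<sigma> \<noteq> 0\<close> by simp
  then show ?thesis using s by simp
qed

lemma exp_top0: "(c::real) < 0 \<Longrightarrow> ((\<lambda>t. exp (c * t)) \<longlongrightarrow> 0) at_top"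
  by (rule filterlim_compose[OF exp_at_bot filterlim_tendsto_neg_mult_at_bot[OF tendsto_const _ filterlim_ident]])

lemma exp_bot0: "(c::real) > 0 \<Longrightarrow> ((\<lambda>t. exp (c * t)) \<longlongrightarrow> 0) at_bot"
proof -
  assume c: "c > 0"
  have "((\<lambda>t. exp ((- c) * t)) \<longlongrightarrow> 0) at_top" using c by (intro exp_top0) simp
  then have "((\<lambda>t. exp ((- c) * - t)) \<longlongrightarrow> 0) at_bot"
    by (simp add: at_bot_mirror filterlim_filtermap)
  then show ?thesis by simp
qed

lemma sc0: "((f::'a \<Rightarrow> real) \<longlongrightarrow> 0) F \<Longrightarrow> ((\<lambda>t. f t *\<^sub>R (c::'v::real_normed_vector)) \<longlongrightarrow> 0) F"
  using tendsto_scaleR[OF _ tendsto_const, of f 0 F c] by simp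

lemma G:
  fixes w :: "real \<Rightarrow> 'v::real_normed_vector"
  assumes "finite S"
  shows "((\<lambda>t. \<Sum>\<mu>\<in>S. exp (\<mu> * t) *\<^sub>R w \<mu>) \<longlongrightarrow> L) at_top \<Longrightarrow> \<mu> \<in> S \<Longrightarrow> \<mu> > 0 \<Longrightarrow> w \<mu> = 0"
  using assms
proof (induction S arbitrary: \<mu> rule: finite_linorder_max_induct)
  case empty then show ?case by simp
next
  case (insert b A)
  have bA: "b \<notin> A" using insert by auto
  show ?case
  proof (cases "b > 0")
    case False
    then show ?thesis using insert by fastforce
  next
    case True
    have e: "exp (- b * t) *\<^sub>R (\<Sum>\<mu>\<in>insert b A. exp (\<mu> * t) *\<^sub>R w \<mu>)
        = w b + (\<Sum>\<mu>\<in>A. exp ((\<mu> - b) * t) *\<^sub>R w \<mu>)" for t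
      using bA insert.hyps(1)
      by (simp add: scaleR_sum_right exp_add[symmetric] algebra_simps)
    have "((\<lambda>t. exp (- b * t) *\<^sub>R (\<Sum>\<mu>\<in>insert b A. exp (\<mu> * t) *\<^sub>R w \<mu>)) \<longlongrightarrow> 0 *\<^sub>R L) at_top"
      by (rule tendsto_scaleR[OF exp_top0 insert.prems(1)]) (use True in simp)
    then have t1: "((\<lambda>t. w b + (\<Sum>\<mu>\<in>A. exp ((\<mu> - b) * t) *\<^sub>R w \<mu>)) \<longlongrightarrow> 0) at_top"
      unfolding e by simp
    have t2: "((\<lambda>t. w b + (\<Sum>\<mu>\<in>A. exp ((\<mu> - b) * t) *\<^sub>R w \<mu>)) \<longlongrightarrow> w b + 0) at_top"
      apply (intro tendsto_add tendsto_const tendsto_null_sum)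
      apply (rule sc0)
       apply (rule exp_top0) using insert.hyps(2) by auto
    have wb: "w b = 0" using tendsto_unique[OF _ t1 t2] by simp
    have "((\<lambda>t. \<Sum>\<mu>\<in>A. exp (\<mu> * t) *\<^sub>R w \<mu>) \<longlongrightarrow> L) at_top"
      using insert.prems(1) bA insert.hyps(1) wb by simp
    then show ?thesis using insert wb by auto
  qed
qed

lemma G':
  fixes w :: "real \<Rightarrow> 'v::real_normed_vector"
  assumes "finite S"
  shows "((\<lambda>t. \<Sum>\<mu>\<in>S. exp (\<mu> * t) *\<^sub>R w \<mu>) \<longlongrightarrow> L) at_bot \<Longrightarrow> \<mu> \<in> S \<Longrightarrow> \<mu> < 0 \<Longrightarrow> w \<mu> = 0"
  using assms
proof (induction S arbitrary: \<mu> rule: finite_linorder_min_induct)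
  case empty then show ?case by simp
next
  case (insert b A)
  have bA: "b \<notin> A" using insert by auto
  show ?case
  proof (cases "b < 0")
    case False
    then show ?thesis using insert by fastforce
  next
    case True
    have e: "exp (- b * t) *\<^sub>R (\<Sum>\<mu>\<in>insert b A. exp (\<mu> * t) *\<^sub>R w \<mu>)
        = w b + (\<Sum>\<mu>\<in>A. exp ((\<mu> - b) * t) *\<^sub>R w \<mu>)" for t
      using bA insert.hyps(1)
      by (simp add: scaleR_sum_right exp_add[symmetric] algebra_simps)
    have "((\<lambda>t. exp (- b * t) *\<^sub>R (\<Sum>\<mu>\<in>insert b A. exp (\<mu> * t) *\<^sub>R w \<mu>)) \<longlongrightarrow> 0 *\<^sub>R L) at_bot"
      by (rule tendsto_scaleR[OF exp_bot0 insert.prems(1)]) (use True in simp)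
    then have t1: "((\<lambda>t. w b + (\<Sum>\<mu>\<in>A. exp ((\<mu> - b) * t) *\<^sub>R w \<mu>)) \<longlongrightarrow> 0) at_bot"
      unfolding e by simp
    have t2: "((\<lambda>t. w b + (\<Sum>\<mu>\<in>A. exp ((\<mu> - b) * t) *\<^sub>R w \<mu>)) \<longlongrightarrow> w b + 0) at_bot"
      apply (intro tendsto_add tendsto_const tendsto_null_sum)
      apply (rule sc0)
       apply (rule exp_bot0) using insert.hyps(2) by auto
    have wb: "w b = 0" using tendsto_unique[OF _ t1 t2] by simp
    have "((\<lambda>t. \<Sum>\<mu>\<in>A. exp (\<mu> * t) *\<^sub>R w \<mu>) \<longlongrightarrow> L) at_bot"
      using insert.prems(1) bA insert.hyps(1) wb by simp
    then show ?thesis using insert wb by auto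
  qed
qed




context R begin

lemma span_eig:
  assumes "y \<in> span (\<Union>\<mu>\<in>T. eigsp \<rho> \<mu>)"
  shows "\<exists>S w. finite S \<and> S \<subseteq> T \<and> (\<forall>\<mu>. w \<mu> \<in> eigsp \<rho> \<mu>) \<and> y = (\<Sum>\<mu>\<in>S. w \<mu>)"
  using assms
proof (induction rule: span_induct_alt)
  case base
  show ?case by (rule exI[of _ "{}"], rule exI[of _ "\<lambda>_. 0"]) (simp add: subspace_0[OF eig_subspace])
next
  case (step c x y)
  then obtain \<mu>0 where m0: "\<mu>0 \<in> T" "x \<in> eigsp \<rho> \<mu>0" by auto
  from step obtain S w where Sw: "finite S" "S \<subseteq> T" "\<forall>\<mu>. w \<mu> \<in> eigsp \<rho> \<mu>" "y = (\<Sum>\<mu>\<in>S. w \<mu>)" by blast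
  define w' where "w' = w(\<mu>0 := (if \<mu>0 \<in> S then w \<mu>0 else 0) + c *\<^sub>R x)"
  have "\<forall>\<mu>. w' \<mu> \<in> eigsp \<rho> \<mu>"
    using Sw(3) m0(2) unfolding w'_def
    by (auto intro!: subspace_add[OF eig_subspace] subspace_scale[OF eig_subspace] simp: subspace_0[OF eig_subspace])
  moreover have "c *\<^sub>R x + y = (\<Sum>\<mu>\<in>insert \<mu>0 S. w' \<mu>)"
  proof (cases "\<mu>0 \<in> S")
    case True
    then have "(\<Sum>\<mu>\<in>insert \<mu>0 S. w' \<mu>) = w' \<mu>0 + (\<Sum>\<mu>\<in>S - {\<mu>0}. w' \<mu>)"
      using Sw(1) by (simp add: insert_absorb sum.remove)
    also have "(\<Sum>\<mu>\<in>S - {\<mu>0}. w' \<mu>) = (\<Sum>\<mu>\<in>S - {\<mu>0}. w \<mu>)"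
      by (rule sum.cong) (auto simp: w'_def)
    finally show ?thesis using True Sw(1,4) by (simp add: w'_def sum.remove)
  next
    case False
    have "(\<Sum>\<mu>\<in>S. w' \<mu>) = (\<Sum>\<mu>\<in>S. w \<mu>)"
      by (rule sum.cong) (use False in \<open>auto simp: w'_def\<close>)
    then show ?thesis using False Sw(1,4) by (simp add: w'_def)
  qed
  ultimately show ?case using Sw m0(1) by (intro exI[of _ "insert \<mu>0 S"] exI[of _ w']) auto
qed

lemma a_sum:
  assumes "\<forall>\<mu>\<in>S. w \<mu> \<in> eigsp \<rho> \<mu>"
  shows "a t (\<Sum>\<mu>\<in>S. w \<mu>) = (\<Sum>\<mu>\<in>S. exp (\<mu> * t) *\<^sub>R w \<mu>)"
  using assms by (simp add: linear_sum[OF a_lin] eig_char)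

lemma uniq: assumes "d \<in> eigsp \<rho> 0" "d \<in> Vother \<rho>" shows "d = 0"
proof -
  obtain S w where Sw: "finite S" "S \<subseteq> {\<mu>. \<mu> \<noteq> 0}" "\<forall>\<mu>. w \<mu> \<in> eigsp \<rho> \<mu>" "d = (\<Sum>\<mu>\<in>S. w \<mu>)"
    using span_eig[of d "{\<mu>. \<mu> \<noteq> 0}"] assms(2) unfolding Vother_def by blast
  have e: "(\<Sum>\<mu>\<in>S. exp (\<mu> * t) *\<^sub>R w \<mu>) = d" for t
    using a_sum[of S w t] Sw assms(1) by (simp add: eig_char)
  have "((\<lambda>t. \<Sum>\<mu>\<in>S. exp (\<mu> * t) *\<^sub>R w \<mu>) \<longlongrightarrow> d) at_top" "((\<lambda>t. \<Sum>\<mu>\<in>S. exp (\<mu> * t) *\<^sub>R w \<mu>) \<longlongrightarrow> d) at_bot"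
    unfolding e by simp_all
  note t12 = this
  have "\<forall>\<mu>\<in>S. w \<mu> = 0"
  proof
    fix \<mu> assume m: "\<mu> \<in> S"
    then have "\<mu> \<noteq> 0" using Sw(2) by auto
    show "w \<mu> = 0"
    proof (cases "\<mu> > 0")
      case True then show ?thesis using G[OF Sw(1) t12(1) m] by simp
    next
      case False with \<open>\<mu> \<noteq> 0\<close> have "\<mu> < 0" by simp
      then show ?thesis using G'[OF Sw(1) t12(2) m] by simp
    qed
  qed
  then show ?thesis using Sw(4) by simp
qed

lemma Vminus_Vother: "Vminus \<rho> \<subseteq> Vother \<rho>"
  unfolding Vminus_def Vother_def by (rule span_mono, rule UN_mono) auto

lemma pi0_eq: assumes "w0 \<in> eigsp \<rho> 0" "wm \<in> Vminus \<rho>" shows "pi0 \<rho> (w0 + wm) = w0"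
  unfolding pi0_def
proof (rule the_equality)
  show "w0 \<in> eigsp \<rho> 0 \<and> w0 + wm - w0 \<in> Vother \<rho>" using assms Vminus_Vother by auto
next
  fix w' assume h: "w' \<in> eigsp \<rho> 0 \<and> w0 + wm - w' \<in> Vother \<rho>"
  have "w0 - w' \<in> eigsp \<rho> 0" using h assms(1) by (simp add: subspace_diff[OF eig_subspace])
  moreover have "w0 - w' \<in> Vother \<rho>"
  proof -
    have "(w0 + wm - w') - wm \<in> Vother \<rho>"
      using h assms(2) Vminus_Vother unfolding Vother_def by (blast intro: span_diff)
    then show ?thesis by (simp add: algebra_simps)
  qed
  ultimately show "w' = w0" using uniq by fastforce
qed

lemma Vminus_inv: "q \<in> Vminus \<rho> \<Longrightarrow> a t q \<in> Vminus \<rho>"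
proof -
  assume "q \<in> Vminus \<rho>"
  then obtain S w where Sw: "finite S" "S \<subseteq> {\<mu>. \<mu> < 0}" "\<forall>\<mu>. w \<mu> \<in> eigsp \<rho> \<mu>" "q = (\<Sum>\<mu>\<in>S. w \<mu>)"
    using span_eig[of q "{\<mu>. \<mu> < 0}"] unfolding Vminus_def by blast
  have "a t q = (\<Sum>\<mu>\<in>S. exp (\<mu> * t) *\<^sub>R w \<mu>)" using a_sum Sw by simp
  also have "\<dots> \<in> Vminus \<rho>" unfolding Vminus_def
  proof (intro span_sum span_scale)
    fix \<mu> assume "\<mu> \<in> S"
    then have "w \<mu> \<in> (\<Union>\<mu>\<in>{\<mu>. \<mu> < 0}. eigsp \<rho> \<mu>)" using Sw by auto
    then show "w \<mu> \<in> span (\<Union>\<mu>\<in>{\<mu>. \<mu> < 0}. eigsp \<rho> \<mu>)" by (rule span_base)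
  qed
  finally show ?thesis .
qed

definition "W = {p + q | p q. p \<in> eigsp \<rho> 0 \<and> q \<in> Vminus \<rho>}"

lemma W_subspace: "subspace W"
  unfolding W_def Vminus_def by (intro subspace_sums eig_subspace subspace_span)

lemma W_closed: "closed W" by (rule closed_subspace[OF W_subspace])

lemma W_inv: "u \<in> W \<Longrightarrow> a t u \<in> W"
proof -
  assume "u \<in> W"
  then obtain p q where "u = p + q" "p \<in> eigsp \<rho> 0" "q \<in> Vminus \<rho>" unfolding W_def by blast
  moreover have "a t p = p" using \<open>p \<in> eigsp \<rho> 0\<close> by (simp add: eig_char)
  ultimately show ?thesis unfolding W_def using Vminus_inv by (auto simp: linear_add[OF a_lin])
qed

lemma decay:
  assumes "q \<in> Vminus \<rho>" "filterlim t at_top F"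
  shows "((\<lambda>i. a (t i) q) \<longlongrightarrow> 0) F"
proof -
  obtain S w where Sw: "finite S" "S \<subseteq> {\<mu>. \<mu> < 0}" "\<forall>\<mu>. w \<mu> \<in> eigsp \<rho> \<mu>" "q = (\<Sum>\<mu>\<in>S. w \<mu>)"
    using span_eig[of q "{\<mu>. \<mu> < 0}"] assms(1) unfolding Vminus_def by blast
  have e: "a (t i) q = (\<Sum>\<mu>\<in>S. exp (\<mu> * t i) *\<^sub>R w \<mu>)" for i using a_sum Sw by simp
  show ?thesis unfolding e
    apply (intro tendsto_null_sum sc0)
    apply (rule filterlim_compose[OF exp_top0 assms(2)])
    using Sw(2) by auto
qed

end



lemma upper_tendsto:
  assumes "(y \<longlongrightarrow> y0) F"
  shows "((\<lambda>i. upper (y i)) \<longlongrightarrow> upper y0) F"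
  unfolding upper_def
proof (intro vec_tendstoI)
  fix i j
  show "((\<lambda>t. (\<chi> i j. if i = None then (case j of None \<Rightarrow> 1 | Some k \<Rightarrow> y t $ k) else (if i = j then 1 else 0)) $ i $ j)
     \<longlongrightarrow> (\<chi> i j. if i = None then (case j of None \<Rightarrow> 1 | Some k \<Rightarrow> y0 $ k) else (if i = j then 1 else 0)) $ i $ j) F"
    by (cases j) (auto intro: tendsto_vec_nth assms)
qed

context R begin

lemma a_upper: "a t (\<rho> (upper y) u) = \<rho> (upper (exp ((real CARD('m) + 1) * t) *\<^sub>R y)) (a t u)"
  by (metis hom Aexp_SL upper_SL Aexp_upper)

lemma K:
  assumes w0: "w0 \<in> eigsp \<rho> 0" and uW: "\<rho> (upper f') w0 \<in> W"
  shows "\<rho> (upper f') w0 = w0"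
proof -
  define c where "c = real CARD('m) + 1"
  have c0: "c > 0" unfolding c_def by simp
  define u where "u = \<rho> (upper f') w0"
  obtain p q where pq: "u = p + q" "p \<in> eigsp \<rho> 0" "q \<in> Vminus \<rho>" using uW unfolding W_def u_def by blast
  have at: "a t u = \<rho> (upper (exp (c * t) *\<^sub>R f')) w0" for t
    unfolding u_def c_def a_upper using w0 by (simp add: eig_char)
  have lim: "((\<lambda>t. a t u) \<longlongrightarrow> w0) at_bot"
  proof -
    have "((\<lambda>t. exp (c * t) *\<^sub>R f') \<longlongrightarrow> 0 *\<^sub>R f') at_bot"
      by (intro tendsto_scaleR exp_bot0 c0 tendsto_const)
    then have "((\<lambda>t. \<rho> (upper (exp (c * t) *\<^sub>R f')) w0) \<longlongrightarrow> \<rho> (upper 0) w0) at_bot"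
      by (intro cont upper_tendsto tendsto_const) (auto simp: upper_SL)
    then show ?thesis unfolding at by (simp add: upper_0)
  qed
  have atpq: "a t u = p + a t q" for t
    using pq by (simp add: linear_add[OF a_lin] eig_char)
  obtain S w where Sw: "finite S" "S \<subseteq> {\<mu>. \<mu> < 0}" "\<forall>\<mu>. w \<mu> \<in> eigsp \<rho> \<mu>" "q = (\<Sum>\<mu>\<in>S. w \<mu>)"
    using span_eig[of q "{\<mu>. \<mu> < 0}"] pq(3) unfolding Vminus_def by blast
  have e: "a t q = (\<Sum>\<mu>\<in>S. exp (\<mu> * t) *\<^sub>R w \<mu>)" for t using a_sum Sw by simp
  have "((\<lambda>t. a t u - p) \<longlongrightarrow> w0 - p) at_bot" by (intro tendsto_diff lim tendsto_const)
  then have "((\<lambda>t. \<Sum>\<mu>\<in>S. exp (\<mu> * t) *\<^sub>R w \<mu>) \<longlongrightarrow> w0 - p) at_bot"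
    unfolding atpq e[symmetric] by simp
  then have "\<forall>\<mu>\<in>S. w \<mu> = 0" using G'[OF Sw(1)] Sw(2) by blast
  then have q0: "q = 0" using Sw(4) by simp
  then have "\<And>t. a t u = p" using atpq by (simp add: linear_0[OF a_lin])
  with lim have "((\<lambda>t::real. p) \<longlongrightarrow> w0) at_bot" by simp
  then have "p = w0" using tendsto_unique[OF _ _ tendsto_const] by (metis trivial_limit_at_bot_linorder)
  then show ?thesis using pq(1) q0 u_def by simp
qed

end



context R begin

lemma sign_case:
  assumes xs: "xs \<longlonglongrightarrow> x"
    and zW: "\<forall>i. \<rho> (upper (xs i)) v \<in> W"
    and d0: "\<delta> \<longlonglongrightarrow> 0"
    and fl: "(\<lambda>i. (1 / \<delta> i) *\<^sub>R (xs i - x)) \<longlonglongrightarrow> f"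
    and w: "\<rho> (upper x) v = w0 + wm" "w0 \<in> eigsp \<rho> 0" "wm \<in> Vminus \<rho>"
    and s: "\<sigma> * \<sigma> = (1::real)"
    and fr: "frequently (\<lambda>i. \<sigma> * \<delta> i > 0) sequentially"
  shows "\<rho> (upper (\<sigma> *\<^sub>R f)) w0 = w0"
proof -
  define P where "P = {i. \<sigma> * \<delta> i > 0}"
  define F where "F = inf sequentially (principal P)"
  have evF: "eventually (\<lambda>i. i \<in> P) F" unfolding F_def eventually_inf_principal by simp
  have Fnb: "F \<noteq> bot"
  proof
    assume "F = bot"
    then have "eventually (\<lambda>i. False) F" by simp
    then have "eventually (\<lambda>i. \<not> (\<sigma> * \<delta> i > 0)) sequentially"
      unfolding F_def eventually_inf_principal P_def by simp
    with fr show False by (simp add: frequently_def)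
  qed
  have seqF: "(g \<longlongrightarrow> l) sequentially \<Longrightarrow> (g \<longlongrightarrow> l) F" for g :: "nat \<Rightarrow> 'z::topological_space" and l
    unfolding F_def by (rule tendsto_mono[OF inf_le1])
  define c where "c = real CARD('m) + 1"
  have c0: "c > 0" unfolding c_def by simp
  define t where "t i = - ln (\<sigma> * \<delta> i) / c" for i
  have tlim: "filterlim t at_top F"
  proof -
    have "((\<lambda>i. \<sigma> * \<delta> i) \<longlongrightarrow> \<sigma> * 0) F" by (intro seqF tendsto_mult tendsto_const d0)
    then have "filterlim (\<lambda>i. \<sigma> * \<delta> i) (at_right 0) F"
      unfolding filterlim_at using evF by (auto simp: P_def elim: eventually_mono)
    then have "filterlim (\<lambda>i. ln (\<sigma> * \<delta> i)) at_bot F" by (rule filterlim_compose[OF ln_at_0])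
    then have "filterlim (\<lambda>i. - ln (\<sigma> * \<delta> i)) at_top F" by (simp add: filterlim_uminus_at_top)
    then have "filterlim (\<lambda>i. (1 / c) * - ln (\<sigma> * \<delta> i)) at_top F"
      by (intro filterlim_tendsto_pos_mult_at_top[OF tendsto_const]) (use c0 in auto)
    then show ?thesis unfolding t_def by simp
  qed
  define z where "z i = a (t i) (\<rho> (upper (xs i)) v)" for i
  have zW2: "eventually (\<lambda>i. z i \<in> W) F" unfolding z_def using zW W_inv by simp
  have ze: "eventually (\<lambda>i. z i = \<rho> (upper (\<sigma> *\<^sub>R ((1 / \<delta> i) *\<^sub>R (xs i - x)))) (w0 + a (t i) wm)) F"
    using evF
  proof (rule eventually_mono)
    fix i assume "i \<in> P"
    then have pos: "\<sigma> * \<delta> i > 0" by (simp add: P_def)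
    have "upper (xs i) = upper (xs i - x) ** upper x" by (simp add: upper_mult)
    then have "\<rho> (upper (xs i)) v = \<rho> (upper (xs i - x)) (w0 + wm)"
      using w(1) by (simp add: hom upper_SL)
    then have "z i = \<rho> (upper (exp (c * t i) *\<^sub>R (xs i - x))) (a (t i) (w0 + wm))"
      unfolding z_def c_def by (simp add: a_upper)
    moreover have "exp (c * t i) = \<sigma> * (1 / \<delta> i)"
    proof -
      have "exp (c * t i) = exp (- ln (\<sigma> * \<delta> i))" unfolding t_def using c0 by simp
      also have "\<dots> = 1 / (\<sigma> * \<delta> i)" using pos by (rule l0)
      also have "\<dots> = \<sigma> * (1 / \<delta> i)" using s pos by (rule l1)
      finally show ?thesis .
    qed
    moreover have "a (t i) (w0 + wm) = w0 + a (t i) wm"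
      using w(2) by (simp add: linear_add[OF a_lin] eig_char)
    ultimately show "z i = \<rho> (upper (\<sigma> *\<^sub>R ((1 / \<delta> i) *\<^sub>R (xs i - x)))) (w0 + a (t i) wm)"
      by simp
  qed
  have "((\<lambda>i. \<rho> (upper (\<sigma> *\<^sub>R ((1 / \<delta> i) *\<^sub>R (xs i - x)))) (w0 + a (t i) wm)) \<longlongrightarrow> \<rho> (upper (\<sigma> *\<^sub>R f)) (w0 + 0)) F"
    by (intro cont upper_tendsto tendsto_scaleR tendsto_const seqF fl tendsto_add decay[OF w(3) tlim])
       (auto simp: upper_SL)
  then have "(z \<longlongrightarrow> \<rho> (upper (\<sigma> *\<^sub>R f)) w0) F"
    using tendsto_cong[OF ze] by simp
  then have "\<rho> (upper (\<sigma> *\<^sub>R f)) w0 \<in> W"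
    by (rule Lim_in_closed_set[OF W_closed zW2 Fnb])
  then show ?thesis by (rule K[OF w(2)])
qed

end



theorem lemma4p5:
  fixes \<rho> :: "real^('m::finite option)^('m option) \<Rightarrow> 'v::euclidean_space \<Rightarrow> 'v"
    and xs :: "nat \<Rightarrow> real^'m" and x f :: "real^'m"
    and \<delta> :: "nat \<Rightarrow> real" and v :: 'v
  assumes "is_rep \<rho>"
    and "xs \<longlonglongrightarrow> x"
    and "\<forall>i. \<rho> (upper (xs i)) v \<in> {a + b | a b. a \<in> eigsp \<rho> 0 \<and> b \<in> Vminus \<rho>}"
    and "\<delta> \<longlonglongrightarrow> 0"
    and "\<forall>i. \<delta> i \<noteq> 0"
    and "(\<lambda>i. (1 / \<delta> i) *\<^sub>R (xs i - x)) \<longlonglongrightarrow> f"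
  shows "upper f \<in> Stab \<rho> (pi0 \<rho> (\<rho> (upper x) v))"
proof -
  interpret R \<rho> by unfold_locales (rule assms(1))
  have zW: "\<forall>i. \<rho> (upper (xs i)) v \<in> W" using assms(3) unfolding W_def .
  have "((\<lambda>i. \<rho> (upper (xs i)) v) \<longlongrightarrow> \<rho> (upper x) v) sequentially"
    by (intro cont upper_tendsto assms(2) tendsto_const) (auto simp: upper_SL)
  note lim1 = this
  have "\<rho> (upper x) v \<in> W"
    by (rule Lim_in_closed_set[OF W_closed _ trivial_limit_sequentially lim1]) (use zW in simp)
  then obtain w0 wm where w: "\<rho> (upper x) v = w0 + wm" "w0 \<in> eigsp \<rho> 0" "wm \<in> Vminus \<rho>"
    unfolding W_def by blast
  have pi: "pi0 \<rho> (\<rho> (upper x) v) = w0" using w pi0_eq by simp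
  have fix0: "\<rho> (upper f) w0 = w0"
  proof (cases "frequently (\<lambda>i. 1 * \<delta> i > 0) sequentially")
    case True
    from sign_case[OF assms(2) zW assms(4) assms(6) w _ True] show ?thesis by simp
  next
    case False
    then have ev1: "eventually (\<lambda>i. \<not> (1 * \<delta> i > 0)) sequentially" by (simp add: not_frequently)
    have hh: "\<not> (1 * \<delta> i > 0) \<Longrightarrow> (-1) * \<delta> i > 0" for i
      using assms(5)[rule_format, of i] by linarith
    have "eventually (\<lambda>i. (-1) * \<delta> i > 0) sequentially"
      using ev1 by (rule eventually_mono) (rule hh)
    then have "frequently (\<lambda>i. (-1) * \<delta> i > 0) sequentially"
      by (rule eventually_frequently[OF trivial_limit_sequentially])
    from sign_case[OF assms(2) zW assms(4) assms(6) w _ this]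
    have "\<rho> (upper (- f)) w0 = w0" by simp
    then have "\<rho> (upper f) w0 = \<rho> (upper f) (\<rho> (upper (- f)) w0)" by simp
    also have "\<dots> = \<rho> (upper f ** upper (- f)) w0" by (simp add: hom upper_SL)
    also have "\<dots> = w0" by (simp add: upper_mult upper_0)
    finally show ?thesis .
  qed
  show ?thesis unfolding Stab_def pi using fix0 upper_SL by simp
qed


end
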